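(* Let $Q_1,\ldots,Q_m\in\mathbb R^{n\times n}$ be symmetric positive semidefinite, $a_{ij}\in\{-1,0,1\}$, $b_i\in\mathbb R^n$, $c_i\in\mathbb R$ for $i=0,1,\ldots,p$, $j=1,\ldots,m$, and $u_i\in\mathbb R$ for $i=1,\ldots,p$. Let $g_i(x)=\sum_{j=1}^m a_{ij}x^TQ_jx+2b_i^Tx+c_i$ and consider \[ ({\rm QCQP_1})\quad \min_{x\in\mathbb R^n}\ g_0(x)\quad\text{s.t.}\quad g_i(x)\le u_i,\ i=1,\ldots,p. \] Let $J=\{j\in\{1,\ldots,m\}:\ a_{ij}=-1\text{ for some } i\in\{0,1,\ldots,p\}\}$, and consider the convex relaxation \[ ({\rm CR})\quad \min_{x,\,t_j(j\in J)}\ \sum_{j\notin J}a_{0j}x^TQ_jx+\sum_{j\in J}a_{0j}t_j+2b_0^Tx+c_0 \] \[ \text{s.t.}\quad \sum_{j\notin J}a_{ij}x^TQ_jx+\sum_{j\in J}a_{ij}t_j+2b_i^Tx+c_i\le u_i,\ i=1,\ldots,p,\qquad \left\|\begin{pmatrix}Q_j^{1/2}x\\ \frac{t_j-1}{2}\end{pmatrix}\right\|\le\frac{t_j+1}{2},\ j\in J. \] Suppose \[ \max_{j\in J}\ \dim\Big({\rm span}\Big(\{b_1,\ldots,b_p\}\cup\mathcal N(Q_j)\cup\bigcup_{i\in\{1,\ldots,m\},\,i\ne j}\mathcal R(Q_i)\Big)\Big)\le n-1, \] and $v({\rm CR})>-\infty$. Then $({\rm QCQP_1})$ is equivalent to (CR),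 in the sense that $x^*$ globally solves $({\rm QCQP_1})$ if and only if $(x^*,t^*_j(j\in J)):=(x^*,x^{*T}Q_jx^*(j\in J))$ globally solves (CR).
   Context: $\mathcal N(Q)$ and $\mathcal R(Q)$ denote the null space and range of a matrix $Q$; $Q^{1/2}$ is the positive semidefinite square root; $v(\cdot)$ denotes the optimal value; $\|\cdot\|$ is the Euclidean norm. (QCQP$_1$) is the one-sided case (lower bounds $l_i=-\infty$) of the quadratic program with constraints $l_i\le g_i(x)\le u_i$. *)

theory Defs
  imports "HOL-Analysis.Analysis"
begin

definition sym_psd :: "real^'n^'n \<Rightarrow> bool" where
  "sym_psd Q \<longleftrightarrow> transpose Q = Q \<and> (\<forall>x. 0 \<le> x \<bullet> (Q *v x))"

definition psd_sqrt :: "real^'n^'n \<Rightarrow> real^'n^'n" where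
  "psd_sqrt Q = (THE S. sym_psd S \<and> S ** S = Q)"

definition null_sp :: "real^'n^'n \<Rightarrow> (real^'n) set" where
  "null_sp Q = {x. Q *v x = 0}"

definition range_sp :: "real^'n^'n \<Rightarrow> (real^'n) set" where
  "range_sp Q = range (\<lambda>x. Q *v x)"

definition qform :: "real^'n^'n \<Rightarrow> real^'n \<Rightarrow> real" where
  "qform Q x = x \<bullet> (Q *v x)"

definition gfun :: "nat \<Rightarrow> (nat \<Rightarrow> nat \<Rightarrow> real) \<Rightarrow> (nat \<Rightarrow> real^'n^'n) \<Rightarrow>
    (nat \<Rightarrow> real^'n) \<Rightarrow> (nat \<Rightarrow> real) \<Rightarrow> nat \<Rightarrow> real^'n \<Rightarrow> real" where
  "gfun m a Q b c i x = (\<Sum>j=1..m. a i j * qform (Q j) x) + 2 * (b i \<bullet> x) + c i"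

definition Jset :: "nat \<Rightarrow> nat \<Rightarrow> (nat \<Rightarrow> nat \<Rightarrow> real) \<Rightarrow> nat set" where
  "Jset m p a = {j \<in> {1..m}. \<exists>i \<in> {0..p}. a i j = -1}"

definition qcqp_feasible where
  "qcqp_feasible m p a Q b c u x \<longleftrightarrow> (\<forall>i\<in>{1..p}. gfun m a Q b c i x \<le> u i)"

definition qcqp_solves where
  "qcqp_solves m p a Q b c u xs \<longleftrightarrow> qcqp_feasible m p a Q b c u xs \<and>
     (\<forall>x. qcqp_feasible m p a Q b c u x \<longrightarrow> gfun m a Q b c 0 xs \<le> gfun m a Q b c 0 x)"

text \<open>(CR): the relaxed functions; variables t_j are only used for j in J.\<close>
definition crfun :: "nat \<Rightarrow> nat \<Rightarrow> (nat \<Rightarrow> nat \<Rightarrow> real) \<Rightarrow> (nat \<Rightarrow> real^'n^'n) \<Rightarrow>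
    (nat \<Rightarrow> real^'n) \<Rightarrow> (nat \<Rightarrow> real) \<Rightarrow> nat \<Rightarrow> real^'n \<Rightarrow> (nat \<Rightarrow> real) \<Rightarrow> real" where
  "crfun m p a Q b c i x t =
     (\<Sum>j\<in>{1..m} - Jset m p a. a i j * qform (Q j) x) + (\<Sum>j\<in>Jset m p a. a i j * t j)
     + 2 * (b i \<bullet> x) + c i"

definition cr_feasible where
  "cr_feasible m p a Q b c u x t \<longleftrightarrow>
     (\<forall>i\<in>{1..p}. crfun m p a Q b c i x t \<le> u i) \<and>
     (\<forall>j\<in>Jset m p a. sqrt ((norm (psd_sqrt (Q j) *v x))\<^sup>2 + ((t j - 1) / 2)\<^sup>2) \<le> (t j + 1) / 2)"

definition cr_solves where
  "cr_solves m p a Q b c u xs ts \<longleftrightarrow> cr_feasible m p a Q b c u xs ts \<and>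
     (\<forall>x t. cr_feasible m p a Q b c u x t \<longrightarrow> crfun m p a Q b c 0 xs ts \<le> crfun m p a Q b c 0 x t)"

text \<open>Optimal value v(CR) (extended real; +\<infinity> if infeasible).\<close>
definition cr_value :: "nat \<Rightarrow> nat \<Rightarrow> (nat \<Rightarrow> nat \<Rightarrow> real) \<Rightarrow> (nat \<Rightarrow> real^'n^'n) \<Rightarrow>
    (nat \<Rightarrow> real^'n) \<Rightarrow> (nat \<Rightarrow> real) \<Rightarrow> (nat \<Rightarrow> real) \<Rightarrow> ereal" where
  "cr_value m p a Q b c u =
     (INF xt \<in> {(x, t). cr_feasible m p a Q b c u x t}. ereal (crfun m p a Q b c 0 (fst xt) (snd xt)))"

end

theory Submission
  imports Defs
begin


definition symm :: "real^'n^'n \<Rightarrow> bool" where "symm Q \<longleftrightarrow> transpose Q = Q"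

lemma symm_inner: "symm Q \<Longrightarrow> x \<bullet> (Q *v y) = (Q *v x) \<bullet> y"
  by (metis dot_lmul_matrix transpose_matrix_vector symm_def inner_commute)

lemma aux_zero:
  fixes a C :: real
  assumes "\<And>s. 2* s *a \<le> s^2*C"
  shows "a = 0"
proof -
  define K where "K = \<bar>C\<bar> + 1"
  have K: "K > 0" "2*K - C > 0" unfolding K_def by auto
  have "2*(a/K)*a \<le> (a/K)^2*C" using assms .
  hence "2*a^2*K \<le> a^2*C" using K by (simp add: field_simps power2_eq_square)
  hence "a^2 * (2*K - C) \<le> 0" by (simp add: algebra_simps)
  hence "a^2 \<le> 0" using K by (simp add: mult_le_0_iff)
  thus ?thesis by simp
qed

lemma quad_expand:
  assumes "symm Q"
  shows "(x + s *\<^sub>R y) \<bullet> (Q *v (x + s *\<^sub>R y)) = x \<bullet> (Q *v x) + 2* s *(y \<bullet> (Q *v x)) + s^2 * (y \<bullet> (Q *v y))"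
proof -
  have "x \<bullet> (Q *v y) = y \<bullet> (Q *v x)" using symm_inner[OF assms] by (simp add: inner_commute)
  thus ?thesis
    by (simp add: matrix_vector_right_distrib inner_add_left inner_add_right matrix_vector_mult_scaleR power2_eq_square algebra_simps)
qed

lemma psd_zero:
  assumes "symm Q" "\<And>z. 0 \<le> z \<bullet> (Q *v z)" "x \<bullet> (Q *v x) = 0"
  shows "Q *v x = 0"
proof -
  have "\<And>y. y \<bullet> (Q *v x) = 0"
  proof -
    fix y
    show "y \<bullet> (Q *v x) = 0"
    proof (rule aux_zero[where C="y \<bullet> (Q *v y)"])
      fix s :: real
      have "0 \<le> (x + (-s) *\<^sub>R y) \<bullet> (Q *v (x + (-s) *\<^sub>R y))" by (rule assms(2))
      also have "\<dots> = x \<bullet> (Q *v x) + 2*(-s)*(y \<bullet> (Q *v x)) + (-s)^2 * (y \<bullet> (Q *v y))"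
        by (rule quad_expand[OF assms(1)])
      finally show "2 * s * (y \<bullet> (Q *v x)) \<le> s^2 * (y \<bullet> (Q *v y))"
        using assms(3) by simp
    qed
  qed
  from this[of "Q *v x"] show ?thesis by simp
qed

lemma top_eig:
  fixes Q :: "real^'n^'n"
  assumes sy: "symm Q" and V: "subspace V" "V \<noteq> {0}" and inv: "\<And>y. y \<in> V \<Longrightarrow> Q *v y \<in> V"
  shows "\<exists>x\<in>V. norm x = 1 \<and> Q *v x = (x \<bullet> (Q *v x)) *\<^sub>R x \<and>
            (\<forall>y\<in>V. y \<bullet> (Q *v y) \<le> (x \<bullet> (Q *v x)) * (y \<bullet> y))"
proof -
  let ?S = "V \<inter> sphere 0 1"
  have cS: "compact ?S" using closed_subspace[OF V(1)] compact_sphere by (metis closed_Int_compact)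
  obtain v where v: "v \<in> V" "v \<noteq> 0" using V subspace_0 by blast
  have "v /\<^sub>R norm v \<in> ?S" using v V(1) by (simp add: subspace_scale)
  hence ne: "?S \<noteq> {}" by blast
  have cont: "continuous_on ?S (\<lambda>x. x \<bullet> (Q *v x))"
    by (intro continuous_intros matrix_vector_mult_linear_continuous_on[THEN continuous_on_subset]) auto
  obtain x where x: "x \<in> ?S" and xmax: "\<And>y. y \<in> ?S \<Longrightarrow> y \<bullet> (Q *v y) \<le> x \<bullet> (Q *v x)"
    using continuous_attains_sup[OF cS ne cont] by blast
  define l where "l = x \<bullet> (Q *v x)"
  have nx: "norm x = 1" "x \<in> V" using x by auto
  have bound: "y \<bullet> (Q *v y) \<le> l * (y \<bullet> y)" if "y \<in> V" for y
  proof (cases "y = 0")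
    case True thus ?thesis by simp
  next
    case False
    have "y /\<^sub>R norm y \<in> ?S" using that False V(1) by (simp add: subspace_scale)
    hence "(y /\<^sub>R norm y) \<bullet> (Q *v (y /\<^sub>R norm y)) \<le> l" using xmax l_def by blast
    hence "(y \<bullet> (Q *v y)) / (norm y)^2 \<le> l"
      by (simp add: matrix_vector_mult_scaleR power2_eq_square divide_inverse mult_ac)
    moreover have "(norm y)^2 = y \<bullet> y" by (simp add: power2_norm_eq_inner)
    moreover have "norm y > 0" using False by simp
    ultimately show ?thesis by (simp add: field_simps)
  qed
  have orth: "z \<bullet> (Q *v x - l *\<^sub>R x) = 0" if "z \<in> V" for z
  proof -
    have "z \<bullet> (Q *v x) - l * (x \<bullet> z) = 0"
    proof (rule aux_zero[where C="l * (z \<bullet> z) - z \<bullet> (Q *v z)"])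
      fix s :: real
      have "x + s *\<^sub>R z \<in> V" using that nx V(1) by (simp add: subspace_add subspace_scale)
      hence "(x + s *\<^sub>R z) \<bullet> (Q *v (x + s *\<^sub>R z)) \<le> l * ((x + s *\<^sub>R z) \<bullet> (x + s *\<^sub>R z))" by (rule bound)
      moreover have "x \<bullet> x = 1" using nx by (simp add: norm_eq_1)
      moreover have "(x + s *\<^sub>R z) \<bullet> (Q *v (x + s *\<^sub>R z)) = l + 2 * s*(z \<bullet> (Q *v x)) + s^2 * (z \<bullet> (Q *v z))"
        using quad_expand[OF sy] l_def by simp
      moreover have "(x + s *\<^sub>R z) \<bullet> (x + s *\<^sub>R z) = x \<bullet> x + 2 * s*(x \<bullet> z) + s^2*(z \<bullet> z)"
        by (simp add: inner_add_left inner_add_right inner_commute power2_eq_square algebra_simps)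
      ultimately have "l + 2 * s*(z \<bullet> (Q *v x)) + s^2 * (z \<bullet> (Q *v z)) \<le> l * (1 + 2 * s*(x \<bullet> z) + s^2*(z \<bullet> z))"
        by simp
      thus "2* s *(z \<bullet> (Q *v x) - l * (x \<bullet> z)) \<le> s^2 * (l * (z \<bullet> z) - z \<bullet> (Q *v z))"
        by (simp add: algebra_simps)
    qed
    thus ?thesis by (simp add: inner_diff_right inner_commute)
  qed
  have "Q *v x - l *\<^sub>R x \<in> V" using inv nx V(1) by (simp add: subspace_diff subspace_scale)
  from orth[OF this] have "Q *v x = l *\<^sub>R x" by simp
  thus ?thesis using nx bound l_def by auto
qed



definition onb :: "(real^'n) set \<Rightarrow> bool" where
  "onb B \<longleftrightarrow> finite B \<and> (\<forall>u\<in>B. \<forall>v\<in>B. u \<noteq> v \<longrightarrow> u \<bullet> v = 0) \<and> (\<forall>v\<in>B. v \<bullet> v = 1)"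

lemma onb_coeff:
  assumes "onb B" "u \<in> B"
  shows "u \<bullet> (\<Sum>v\<in>B. f v *\<^sub>R v) = f u"
proof -
  have fin: "finite B" using assms(1) onb_def by blast
  have "u \<bullet> (\<Sum>v\<in>B. f v *\<^sub>R v) = (\<Sum>v\<in>B. f v * (u \<bullet> v))" by (simp add: inner_sum_right)
  also have "\<dots> = f u * (u \<bullet> u) + (\<Sum>v\<in>B - {u}. f v * (u \<bullet> v))"
    using fin assms(2) by (simp add: sum.remove)
  also have "(\<Sum>v\<in>B - {u}. f v * (u \<bullet> v)) = 0"
    using assms unfolding onb_def by (intro sum.neutral) auto
  finally show ?thesis using assms unfolding onb_def by simp
qed

lemma spectral_sub:
  fixes Q :: "real^'n^'n"
  assumes sy: "symm Q"
  shows "subspace V \<Longrightarrow> (\<And>y. y \<in> V \<Longrightarrow> Q *v y \<in> V) \<Longrightarrow>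
     \<exists>B. onb B \<and> B \<subseteq> V \<and> span B = V \<and> (\<forall>v\<in>B. Q *v v = (v \<bullet> (Q *v v)) *\<^sub>R v)"
proof (induction "dim V" arbitrary: V rule: less_induct)
  case less
  show ?case
  proof (cases "V = {0}")
    case True
    thus ?thesis by (intro exI[of _ "{}"]) (auto simp: onb_def)
  next
    case False
    obtain x where x: "x \<in> V" "norm x = 1" "Q *v x = (x \<bullet> (Q *v x)) *\<^sub>R x"
      using top_eig[OF sy less.prems(1) False less.prems(2)] by blast
    define l where "l = x \<bullet> (Q *v x)"
    have xx: "x \<bullet> x = 1" using x(2) by (simp add: norm_eq_1)
    define W where "W = V \<inter> {y. x \<bullet> y = 0}"
    have sW: "subspace W" unfolding W_def using less.prems(1) subspace_hyperplane[of x] by (metis subspace_inter)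
    have iW: "Q *v y \<in> W" if "y \<in> W" for y
    proof -
      have "x \<bullet> (Q *v y) = (Q *v x) \<bullet> y" by (rule symm_inner[OF sy])
      also have "\<dots> = 0" using that unfolding W_def by (subst x(3)) simp
      finally show ?thesis using that less.prems(2) unfolding W_def by auto
    qed
    have "x \<notin> W" using xx unfolding W_def by simp
    hence "W \<subset> V" using x(1) unfolding W_def by blast
    moreover have "span W = W" "span V = V" using sW less.prems(1) by (simp_all add: span_eq_iff)
    ultimately have "dim W < dim V" by (metis dim_psubset)
    then obtain B where B: "onb B" "B \<subseteq> W" "span B = W" "\<forall>v\<in>B. Q *v v = (v \<bullet> (Q *v v)) *\<^sub>R v"
      using less.hyps[OF _ sW iW] by blast
    have xB: "x \<notin> B" using B(2) xx unfolding W_def by auto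
    have onb2: "onb (insert x B)" using B(1,2) xx xB unfolding onb_def W_def
      by (auto simp: inner_commute)
    have sub: "insert x B \<subseteq> V" using B(2) x(1) W_def by auto
    have "span (insert x B) = V"
    proof
      show "span (insert x B) \<subseteq> V" using sub less.prems(1) by (simp add: span_minimal)
      show "V \<subseteq> span (insert x B)"
      proof
        fix v assume v: "v \<in> V"
        have "v - (x \<bullet> v) *\<^sub>R x \<in> W" unfolding W_def using v x(1) less.prems(1) xx
          by (simp add: subspace_diff subspace_scale inner_diff_right)
        hence "v - (x \<bullet> v) *\<^sub>R x \<in> span (insert x B)" using B(3) span_mono[of B "insert x B"] by auto
        moreover have "(x \<bullet> v) *\<^sub>R x \<in> span (insert x B)" by (simp add: span_base span_scale)
        ultimately have "(v - (x \<bullet> v) *\<^sub>R x) + (x \<bullet> v) *\<^sub>R x \<in> span (insert x B)" by (rule span_add)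
        thus "v \<in> span (insert x B)" by simp
      qed
    qed
    thus ?thesis using onb2 sub B(4) x(3) by (intro exI[of _ "insert x B"]) auto
  qed
qed

lemma spectral:
  fixes Q :: "real^'n^'n"
  assumes sy: "symm Q"
  obtains B where "onb B" "\<And>w. w = (\<Sum>v\<in>B. (v \<bullet> w) *\<^sub>R v)" "\<And>v. v \<in> B \<Longrightarrow> Q *v v = (v \<bullet> (Q *v v)) *\<^sub>R v"
proof -
  obtain B where B: "onb B" "span B = UNIV" "\<forall>v\<in>B. Q *v v = (v \<bullet> (Q *v v)) *\<^sub>R v"
    using spectral_sub[OF sy, of UNIV] by auto
  have "w = (\<Sum>v\<in>B. (v \<bullet> w) *\<^sub>R v)" for w
  proof -
    define r where "r = w - (\<Sum>v\<in>B. (v \<bullet> w) *\<^sub>R v)"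
    have "B \<subseteq> {y. r \<bullet> y = 0}"
    proof
      fix u assume u: "u \<in> B"
      have "u \<bullet> r = 0" unfolding r_def using onb_coeff[OF B(1) u] by (simp add: inner_diff_right)
      thus "u \<in> {y. r \<bullet> y = 0}" by (simp add: inner_commute)
    qed
    hence "span B \<subseteq> {y. r \<bullet> y = 0}" by (simp add: span_minimal subspace_hyperplane)
    hence "r \<bullet> r = 0" using B(2) by blast
    hence "r = 0" by simp
    thus ?thesis unfolding r_def by simp
  qed
  thus ?thesis using that B by blast
qed



lemma sym_psd_iff: "sym_psd Q \<longleftrightarrow> symm Q \<and> (\<forall>x. 0 \<le> x \<bullet> (Q *v x))"
  by (simp add: sym_psd_def symm_def)

lemma sqrt_exists:
  fixes Q :: "real^'n^'n"
  assumes "sym_psd Q"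
  shows "\<exists>S. sym_psd S \<and> S ** S = Q"
proof -
  have sy: "symm Q" and ps: "\<And>x. 0 \<le> x \<bullet> (Q *v x)" using assms by (auto simp: sym_psd_iff)
  obtain B where B: "onb B" "\<And>w. w = (\<Sum>v\<in>B. (v \<bullet> w) *\<^sub>R v)"
      "\<And>v. v \<in> B \<Longrightarrow> Q *v v = (v \<bullet> (Q *v v)) *\<^sub>R v"
    using spectral[OF sy] by blast
  have fin: "finite B" using B(1) onb_def by blast
  define c where "c v = sqrt (v \<bullet> (Q *v v))" for v
  define S :: "real^'n^'n" where "S = (\<chi> i j. \<Sum>v\<in>B. c v * (v$i * v$j))"
  have Sv: "S *v w = (\<Sum>v\<in>B. (c v * (v \<bullet> w)) *\<^sub>R v)" for w
  proof -
    have "(S *v w)$i = (\<Sum>v\<in>B. (c v * (v \<bullet> w)) *\<^sub>R v)$i" for i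
    proof -
      have "(S *v w)$i = (\<Sum>j\<in>UNIV. (\<Sum>v\<in>B. c v * (v$i * v$j)) * w$j)"
        by (simp add: S_def matrix_vector_mult_def)
      also have "\<dots> = (\<Sum>j\<in>UNIV. \<Sum>v\<in>B. c v * v$i * (v$j * w$j))"
        by (simp add: sum_distrib_left sum_distrib_right mult_ac)
      also have "\<dots> = (\<Sum>v\<in>B. \<Sum>j\<in>UNIV. c v * v$i * (v$j * w$j))"
        by (rule sum.swap)
      also have "\<dots> = (\<Sum>v\<in>B. c v * v$i * (v \<bullet> w))"
        by (simp add: inner_vec_def sum_distrib_left)
      also have "\<dots> = (\<Sum>v\<in>B. (c v * (v \<bullet> w)) *\<^sub>R v)$i"
        by (simp add: sum_component mult_ac)
      finally show ?thesis .
    qed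
    thus ?thesis by (simp add: vec_eq_iff)
  qed
  have cc: "c v * c v = v \<bullet> (Q *v v)" for v
    unfolding c_def using ps[of v] by simp
  have "(S ** S) *v w = Q *v w" for w
  proof -
    have "(S ** S) *v w = S *v (S *v w)" by (simp add: matrix_vector_mul_assoc)
    also have "\<dots> = (\<Sum>u\<in>B. (c u * (u \<bullet> (S *v w))) *\<^sub>R u)" by (rule Sv)
    also have "\<dots> = (\<Sum>u\<in>B. ((u \<bullet> (Q *v u)) * (u \<bullet> w)) *\<^sub>R u)"
    proof (rule sum.cong[OF refl])
      fix u assume u: "u \<in> B"
      have "u \<bullet> (S *v w) = c u * (u \<bullet> w)" unfolding Sv using onb_coeff[OF B(1) u] by simp
      thus "(c u * (u \<bullet> (S *v w))) *\<^sub>R u = ((u \<bullet> (Q *v u)) * (u \<bullet> w)) *\<^sub>R u"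
        using cc[of u] by (simp add: mult.assoc[symmetric])
    qed
    also have "\<dots> = (\<Sum>u\<in>B. (u \<bullet> w) *\<^sub>R (Q *v u))"
    proof (rule sum.cong[OF refl])
      fix u assume u: "u \<in> B"
      show "((u \<bullet> (Q *v u)) * (u \<bullet> w)) *\<^sub>R u = (u \<bullet> w) *\<^sub>R (Q *v u)"
        by (subst B(3)[OF u]) (simp add: mult_ac)
    qed
    also have "\<dots> = Q *v (\<Sum>u\<in>B. (u \<bullet> w) *\<^sub>R u)"
      by (simp add: vec.sum matrix_vector_mult_scaleR)
    also have "\<dots> = Q *v w" using B(2)[of w] by simp
    finally show ?thesis .
  qed
  hence SS: "S ** S = Q" by (simp add: matrix_eq)
  have "transpose S = S" by (simp add: S_def transpose_def vec_eq_iff mult.commute)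
  moreover have "0 \<le> x \<bullet> (S *v x)" for x
  proof -
    have "x \<bullet> (S *v x) = (\<Sum>v\<in>B. c v * (v \<bullet> x) * (v \<bullet> x))"
      unfolding Sv by (simp add: inner_sum_right inner_commute mult_ac)
    also have "\<dots> \<ge> 0" using ps by (intro sum_nonneg) (simp add: c_def mult.assoc)
    finally show ?thesis .
  qed
  ultimately show ?thesis using SS by (auto simp: sym_psd_def)
qed
lemma symm_diff: "symm S \<Longrightarrow> symm T \<Longrightarrow> symm (S - T)"
  by (simp add: symm_def transpose_def vec_eq_iff)

lemma eig_zero:
  fixes S T :: "real^'n^'n"
  assumes S: "sym_psd S" and T: "sym_psd T" and eq: "S ** S = T ** T"
    and v: "(S - T) *v v = \<mu> *\<^sub>R v" "v \<noteq> 0"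
  shows "\<mu> = 0"
proof (rule ccontr)
  assume mu: "\<mu> \<noteq> 0"
  have sS: "symm S" and pS: "\<And>x. 0 \<le> x \<bullet> (S *v x)" using S by (auto simp: sym_psd_iff)
  have sT: "symm T" and pT: "\<And>x. 0 \<le> x \<bullet> (T *v x)" using T by (auto simp: sym_psd_iff)
  have sD: "symm (S - T)" using sS sT by (rule symm_diff)
  have SS: "S *v (S *v v) = T *v (T *v v)" using eq by (simp add: matrix_vector_mul_assoc)
  have "v \<bullet> (S *v ((S - T) *v v)) + v \<bullet> ((S - T) *v (T *v v)) = v \<bullet> (S *v (S *v v)) - v \<bullet> (T *v (T *v v))"
    by (simp add: matrix_vector_mult_diff_rdistrib matrix_vector_mult_diff_distrib inner_diff_right)
  also have "\<dots> = 0" using SS by simp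
  finally have "v \<bullet> (S *v ((S - T) *v v)) + v \<bullet> ((S - T) *v (T *v v)) = 0" .
  moreover have "v \<bullet> ((S - T) *v (T *v v)) = ((S - T) *v v) \<bullet> (T *v v)" by (rule symm_inner[OF sD])
  moreover have "v \<bullet> (T *v v) = (T *v v) \<bullet> v" by (simp add: inner_commute)
  ultimately have "\<mu> * (v \<bullet> (S *v v) + v \<bullet> (T *v v)) = 0"
    using v(1) by (simp add: matrix_vector_mult_scaleR algebra_simps inner_commute)
  hence "v \<bullet> (S *v v) + v \<bullet> (T *v v) = 0" using mu by simp
  hence "v \<bullet> (S *v v) = 0" "v \<bullet> (T *v v) = 0" using pS[of v] pT[of v] by linarith+
  hence "S *v v = 0" "T *v v = 0" using psd_zero sS pS sT pT by blast+
  hence "\<mu> *\<^sub>R v = 0" using v(1) by (simp add: matrix_vector_mult_diff_rdistrib)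
  thus False using mu v(2) by simp
qed

lemma quad_le0:
  fixes S T :: "real^'n^'n"
  assumes S: "sym_psd S" and T: "sym_psd T" and eq: "S ** S = T ** T"
  shows "y \<bullet> ((S - T) *v y) \<le> 0"
proof -
  have sD: "symm (S - T)" using S T by (auto simp: sym_psd_iff intro: symm_diff)
  obtain x where x: "norm x = 1" "(S - T) *v x = (x \<bullet> ((S - T) *v x)) *\<^sub>R x"
      "\<forall>y. y \<bullet> ((S - T) *v y) \<le> (x \<bullet> ((S - T) *v x)) * (y \<bullet> y)"
    using top_eig[OF sD subspace_UNIV] by auto
  have "x \<bullet> ((S - T) *v x) = 0" using eig_zero[OF S T eq x(2)] x(1) by (metis norm_zero zero_neq_one)
  thus ?thesis using x(3) by simp
qed

lemma sqrt_unique: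
  fixes S T :: "real^'n^'n"
  assumes S: "sym_psd S" and T: "sym_psd T" and eq: "S ** S = T ** T"
  shows "S = T"
proof -
  have sD: "symm (S - T)" using S T by (auto simp: sym_psd_iff intro: symm_diff)
  have z: "y \<bullet> ((S - T) *v y) = 0" for y
  proof -
    have "y \<bullet> ((T - S) *v y) \<le> 0" using quad_le0[OF T S eq[symmetric]] .
    moreover have "(T - S) *v y = - ((S - T) *v y)" by (simp add: matrix_vector_mult_diff_rdistrib)
    ultimately show ?thesis using quad_le0[OF S T eq, of y] by simp
  qed
  have "(S - T) *v y = 0" for y using psd_zero[OF sD] z by (metis order_refl)
  hence "S - T = 0" by (simp add: matrix_eq)
  thus ?thesis by simp
qed

lemma psd_sqrt_props:
  assumes "sym_psd Q"
  shows "sym_psd (psd_sqrt Q) \<and> psd_sqrt Q ** psd_sqrt Q = Q"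
proof -
  have "\<exists>!S. sym_psd S \<and> S ** S = Q"
    using sqrt_exists[OF assms] sqrt_unique by metis
  thus ?thesis unfolding psd_sqrt_def by (rule theI')
qed

lemma norm_sqrt_sq:
  assumes "sym_psd Q"
  shows "(norm (psd_sqrt Q *v x))^2 = qform Q x"
proof -
  let ?S = "psd_sqrt Q"
  have p: "sym_psd ?S" "?S ** ?S = Q" using psd_sqrt_props[OF assms] by auto
  have "(norm (?S *v x))^2 = (?S *v x) \<bullet> (?S *v x)" by (simp add: power2_norm_eq_inner)
  also have "\<dots> = x \<bullet> (?S *v (?S *v x))" using symm_inner[of ?S x "?S *v x"] p(1) by (simp add: sym_psd_iff)
  also have "\<dots> = qform Q x" using p(2) by (simp add: qform_def matrix_vector_mul_assoc)
  finally show ?thesis .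
qed




lemma soc_iff:
  fixes A t :: real
  assumes "0 \<le> A"
  shows "sqrt (A + ((t - 1) / 2)^2) \<le> (t + 1) / 2 \<longleftrightarrow> A \<le> t"
proof
  assume h: "sqrt (A + ((t - 1) / 2)^2) \<le> (t + 1) / 2"
  hence "A + ((t - 1) / 2)^2 \<le> ((t + 1) / 2)^2" by (rule sqrt_le_D)
  thus "A \<le> t" by (simp add: power2_eq_square field_simps)
next
  assume h: "A \<le> t"
  hence "A + ((t - 1) / 2)^2 \<le> ((t + 1) / 2)^2" by (simp add: power2_eq_square field_simps)
  moreover have "0 \<le> (t + 1) / 2" using h assms by simp
  ultimately show "sqrt (A + ((t - 1) / 2)^2) \<le> (t + 1) / 2"
    using real_sqrt_le_iff'[of "A + ((t - 1) / 2)^2" "(t + 1) / 2"] assms by simp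
qed

lemma qform_nonneg: "sym_psd Q \<Longrightarrow> 0 \<le> qform Q x"
  by (simp add: sym_psd_def qform_def)

lemma J_sub: "Jset m p a \<subseteq> {1..m}" by (auto simp: Jset_def)

lemma sum_split:
  assumes "J \<subseteq> {1..m::nat}"
  shows "(\<Sum>j=1..m. f j) = (\<Sum>j\<in>{1..m} - J. f j) + (\<Sum>j\<in>J. f j)"
  using sum.subset_diff[OF assms, of f] by simp

lemma crfun_q: "crfun m p a Q b c i x (\<lambda>j. qform (Q j) x) = gfun m a Q b c i x"
  unfolding crfun_def gfun_def using sum_split[OF J_sub[of m p a], where f="\<lambda>j. a i j * qform (Q j) x"]
  by simp

lemma soc_q:
  assumes "sym_psd Q"
  shows "sqrt ((norm (psd_sqrt Q *v x))\<^sup>2 + ((t - 1) / 2)\<^sup>2) \<le> (t + 1) / 2 \<longleftrightarrow> qform Q x \<le> t"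
  using soc_iff[OF qform_nonneg[OF assms, of x]] norm_sqrt_sq[OF assms] by simp

lemma root_exists:
  fixes al be ga t e :: real
  assumes "ga > 0" "al \<le> t"
  shows "\<exists>s. al + 2 * s * be + s^2 * ga = t \<and> s * e \<le> 0"
proof -
  define r where "r = sqrt (be^2 - ga * (al - t))"
  have gn: "ga * (al - t) \<le> 0" using assms by (simp add: mult_nonneg_nonpos)
  have bb: "0 \<le> be^2" by simp
  have rr: "r^2 = be^2 - ga * (al - t)" unfolding r_def using assms
    using gn bb by (intro real_sqrt_pow2) linarith
  have rb: "\<bar>be\<bar> \<le> r" unfolding r_def using assms
    using gn by (intro real_le_rsqrt) simp
  have root: "al + 2 * s * be + s^2 * ga = t" if "s = (- be + sg * r) / ga" "sg^2 = 1" for s sg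
  proof -
    have h: "be + ga * s = sg * r" using that assms(1) by (simp add: field_simps)
    have h2: "(be + ga * s)^2 = r^2" using that(2) by (simp add: h power_mult_distrib)
    have "ga * (al + 2 * s * be + s^2 * ga - t) = (be + ga * s)^2 - be^2 + ga * (al - t)"
      by (simp add: power2_eq_square algebra_simps)
    also have "\<dots> = 0" using rr h2 by simp
    finally show ?thesis using assms(1) by simp
  qed
  show ?thesis
  proof (cases "e \<le> 0")
    case True
    define s where "s = (- be + 1 * r) / ga"
    have "s \<ge> 0" unfolding s_def using rb assms(1) by simp
    thus ?thesis using root[OF s_def] True by (intro exI[of _ s]) (simp add: mult_nonneg_nonpos)
  next
    case False
    define s where "s = (- be + (-1) * r) / ga"
    have "s \<le> 0" unfolding s_def using rb assms(1) by (simp add: divide_nonpos_pos)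
    thus ?thesis using root[OF s_def] False by (intro exI[of _ s]) (simp add: mult_nonpos_nonneg)
  qed
qed



lemma dir_exists:
  fixes Q :: "nat \<Rightarrow> real^'n^'n"
  assumes psd: "\<forall>j\<in>{1..m}. sym_psd (Q j)" and j: "j \<in> {1..m}"
    and dimc: "dim (span (b ` {1..p} \<union> null_sp (Q j) \<union> (\<Union>i\<in>{1..m} - {j}. range_sp (Q i))))
          \<le> CARD('n) - 1"
  shows "\<exists>d. (\<forall>i\<in>{1..p}. b i \<bullet> d = 0) \<and> (\<forall>i\<in>{1..m} - {j}. Q i *v d = 0) \<and> d \<bullet> (Q j *v d) > 0"
proof -
  let ?X = "b ` {1..p} \<union> null_sp (Q j) \<union> (\<Union>i\<in>{1..m} - {j}. range_sp (Q i))"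
  have c0: "CARD('n) > 0" by simp
  have "dim ?X \<le> CARD('n) - 1" using dimc by (simp add: dim_span)
  hence "dim ?X < CARD('n)" using c0 by linarith
  hence "dim ?X < DIM(real^'n)" by simp
  then obtain d where d: "d \<noteq> 0" "\<And>y. y \<in> span ?X \<Longrightarrow> orthogonal d y"
    using orthogonal_to_subspace_exists by blast
  have o: "d \<bullet> y = 0" if "y \<in> ?X" for y using d(2)[OF span_base[OF that]] by (simp add: orthogonal_def)
  have b: "\<forall>i\<in>{1..p}. b i \<bullet> d = 0"
  proof
    fix i assume "i \<in> {1..p}"
    hence "b i \<in> ?X" by blast
    thus "b i \<bullet> d = 0" using o inner_commute by metis
  qed
  have q: "\<forall>i\<in>{1..m} - {j}. Q i *v d = 0"
  proof
    fix i assume i: "i \<in> {1..m} - {j}"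
    have "Q i *v (Q i *v d) \<in> range_sp (Q i)" by (simp add: range_sp_def)
    hence "d \<bullet> (Q i *v (Q i *v d)) = 0" using o i by blast
    moreover have "symm (Q i)" using psd i by (simp add: sym_psd_iff)
    ultimately have "(Q i *v d) \<bullet> (Q i *v d) = 0" using symm_inner by metis
    thus "Q i *v d = 0" by simp
  qed
  have sj: "symm (Q j)" "\<And>z. 0 \<le> z \<bullet> (Q j *v z)" using psd j by (auto simp: sym_psd_iff)
  have "d \<bullet> (Q j *v d) \<noteq> 0"
  proof
    assume "d \<bullet> (Q j *v d) = 0"
    hence "Q j *v d = 0" using psd_zero[OF sj] by blast
    hence "d \<in> ?X" by (simp add: null_sp_def)
    hence "d \<bullet> d = 0" by (rule o)
    thus False using d(1) by simp
  qed
  hence "d \<bullet> (Q j *v d) > 0" using sj(2)[of d] by linarith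
  thus ?thesis using b q by blast
qed

lemma qform_eq:
  assumes "symm Q" "Q *v x = Q *v y"
  shows "qform Q x = qform Q y"
proof -
  have "qform Q x = x \<bullet> (Q *v y)" using assms by (simp add: qform_def)
  also have "\<dots> = (Q *v x) \<bullet> y" by (rule symm_inner[OF assms(1)])
  also have "\<dots> = qform Q y" using assms by (simp add: qform_def inner_commute)
  finally show ?thesis .
qed

lemma construct:
  fixes Q :: "nat \<Rightarrow> real^'n^'n"
  assumes psd: "\<forall>j\<in>{1..m}. sym_psd (Q j)"
    and dim_cond: "\<forall>j\<in>Jset m p a.
        dim (span (b ` {1..p} \<union> null_sp (Q j) \<union> (\<Union>i\<in>{1..m} - {j}. range_sp (Q i))))
          \<le> CARD('n) - 1"
    and feas: "cr_feasible m p a Q b c u x t"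
  shows "\<exists>x'. qcqp_feasible m p a Q b c u x' \<and> gfun m a Q b c 0 x' \<le> crfun m p a Q b c 0 x t"
proof -
  let ?J = "Jset m p a"
  have Jm: "?J \<subseteq> {1..m}" by (rule J_sub)
  have fJ: "finite ?J" using Jm finite_subset by blast
  have qt: "qform (Q j) x \<le> t j" if "j \<in> ?J" for j
    using feas that soc_q[of "Q j" x "t j"] psd Jm unfolding cr_feasible_def by blast
  have "\<forall>j\<in>?J. \<exists>ds. (\<forall>i\<in>{1..p}. b i \<bullet> fst ds = 0) \<and> (\<forall>i\<in>{1..m} - {j}. Q i *v fst ds = 0)
        \<and> qform (Q j) (x + snd ds *\<^sub>R fst ds) = t j \<and> snd ds * (b 0 \<bullet> fst ds) \<le> 0"
  proof
    fix j assume j: "j \<in> ?J"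
    obtain d where d: "\<forall>i\<in>{1..p}. b i \<bullet> d = 0" "\<forall>i\<in>{1..m} - {j}. Q i *v d = 0" "d \<bullet> (Q j *v d) > 0"
      using dir_exists[OF psd] j Jm dim_cond by blast
    obtain s where s: "qform (Q j) x + 2 * s * (d \<bullet> (Q j *v x)) + s^2 * (d \<bullet> (Q j *v d)) = t j"
        "s * (b 0 \<bullet> d) \<le> 0"
      using root_exists[OF d(3) qt[OF j]] by blast
    have sy: "symm (Q j)" using psd j Jm by (auto simp: sym_psd_iff)
    hence "qform (Q j) (x + s *\<^sub>R d) = t j" using s(1) quad_expand[OF sy, of x s d] by (simp add: qform_def)
    thus "\<exists>ds. (\<forall>i\<in>{1..p}. b i \<bullet> fst ds = 0) \<and> (\<forall>i\<in>{1..m} - {j}. Q i *v fst ds = 0)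
        \<and> qform (Q j) (x + snd ds *\<^sub>R fst ds) = t j \<and> snd ds * (b 0 \<bullet> fst ds) \<le> 0"
      using d s by (intro exI[of _ "(d, s)"]) auto
  qed
  then obtain f where f: "\<forall>j\<in>?J. (\<forall>i\<in>{1..p}. b i \<bullet> fst (f j) = 0) \<and> (\<forall>i\<in>{1..m} - {j}. Q i *v fst (f j) = 0)
        \<and> qform (Q j) (x + snd (f j) *\<^sub>R fst (f j)) = t j \<and> snd (f j) * (b 0 \<bullet> fst (f j)) \<le> 0"
    by (rule bchoice[elim_format]) blast
  define d where "d j = fst (f j)" for j
  define s where "s j = snd (f j)" for j
  define x' where "x' = x + (\<Sum>j\<in>?J. s j *\<^sub>R d j)"
  have Qx': "Q k *v x' = Q k *v (x + (if k \<in> ?J then s k *\<^sub>R d k else 0))" if k: "k \<in> {1..m}" for k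
  proof -
    have "Q k *v x' = Q k *v x + (\<Sum>j\<in>?J. s j *\<^sub>R (Q k *v d j))"
      by (simp add: x'_def matrix_vector_right_distrib vec.sum matrix_vector_mult_scaleR)
    also have "(\<Sum>j\<in>?J. s j *\<^sub>R (Q k *v d j)) = (\<Sum>j\<in>?J. if j = k then s k *\<^sub>R (Q k *v d k) else 0)"
      using f k unfolding d_def by (intro sum.cong) auto
    also have "\<dots> = (if k \<in> ?J then s k *\<^sub>R (Q k *v d k) else 0)"
      using fJ by (simp add: sum.delta')
    finally show ?thesis by (simp add: matrix_vector_right_distrib matrix_vector_mult_scaleR)
  qed
  have qJ: "qform (Q k) x' = t k" if "k \<in> ?J" for k
  proof -
    have k: "k \<in> {1..m}" using that Jm by auto
    have "symm (Q k)" using psd k by (auto simp: sym_psd_iff)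
    hence "qform (Q k) x' = qform (Q k) (x + s k *\<^sub>R d k)" using Qx'[OF k] that by (intro qform_eq) auto
    thus ?thesis using f that unfolding s_def d_def by auto
  qed
  have qN: "qform (Q k) x' = qform (Q k) x" if "k \<in> {1..m} - ?J" for k
  proof -
    have k: "k \<in> {1..m}" using that by auto
    have "symm (Q k)" using psd k by (auto simp: sym_psd_iff)
    thus ?thesis using Qx'[OF k] that by (intro qform_eq) auto
  qed
  have bI: "b i \<bullet> x' = b i \<bullet> x" if "i \<in> {1..p}" for i
  proof -
    have "b i \<bullet> x' = b i \<bullet> x + (\<Sum>j\<in>?J. s j * (b i \<bullet> d j))"
      by (simp add: x'_def inner_add_right inner_sum_right)
    also have "(\<Sum>j\<in>?J. s j * (b i \<bullet> d j)) = 0" using f that unfolding d_def by (intro sum.neutral) auto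
    finally show ?thesis by simp
  qed
  have b0: "b 0 \<bullet> x' \<le> b 0 \<bullet> x"
  proof -
    have "b 0 \<bullet> x' = b 0 \<bullet> x + (\<Sum>j\<in>?J. s j * (b 0 \<bullet> d j))"
      by (simp add: x'_def inner_add_right inner_sum_right)
    also have "(\<Sum>j\<in>?J. s j * (b 0 \<bullet> d j)) \<le> 0" using f unfolding d_def s_def by (intro sum_nonpos) auto
    finally show ?thesis by simp
  qed
  have gc: "gfun m a Q b c i x' = crfun m p a Q b c i x t + 2 * (b i \<bullet> x' - b i \<bullet> x)" for i
  proof -
    have "(\<Sum>j=1..m. a i j * qform (Q j) x') =
        (\<Sum>j\<in>{1..m} - ?J. a i j * qform (Q j) x') + (\<Sum>j\<in>?J. a i j * qform (Q j) x')"
      by (rule sum_split[OF Jm])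
    also have "\<dots> = (\<Sum>j\<in>{1..m} - ?J. a i j * qform (Q j) x) + (\<Sum>j\<in>?J. a i j * t j)"
      using qJ qN by simp
    finally show ?thesis unfolding gfun_def crfun_def by (simp add: algebra_simps)
  qed
  have "qcqp_feasible m p a Q b c u x'"
    unfolding qcqp_feasible_def using gc bI feas unfolding cr_feasible_def by simp
  moreover have "gfun m a Q b c 0 x' \<le> crfun m p a Q b c 0 x t" using gc[of 0] b0 by simp
  ultimately show ?thesis by blast
qed


theorem theorem3:
  fixes m p :: nat
    and Q :: "nat \<Rightarrow> real^'n^'n"
    and a :: "nat \<Rightarrow> nat \<Rightarrow> real"
    and b :: "nat \<Rightarrow> real^'n"
    and c u :: "nat \<Rightarrow> real"
    and xs :: "real^'n"
  assumes psd: "\<forall>j\<in>{1..m}. sym_psd (Q j)"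
    and a_vals: "\<forall>i\<in>{0..p}. \<forall>j\<in>{1..m}. a i j \<in> {-1, 0, 1}"
    and dim_cond: "\<forall>j\<in>Jset m p a.
        dim (span (b ` {1..p} \<union> null_sp (Q j) \<union> (\<Union>i\<in>{1..m} - {j}. range_sp (Q i))))
          \<le> CARD('n) - 1"
    and bounded: "cr_value m p a Q b c u > -\<infinity>"
  shows "qcqp_solves m p a Q b c u xs \<longleftrightarrow>
         cr_solves m p a Q b c u xs (\<lambda>j. qform (Q j) xs)"
proof -
  have socq: "\<forall>j\<in>Jset m p a. sqrt ((norm (psd_sqrt (Q j) *v x))\<^sup>2 + ((qform (Q j) x - 1) / 2)\<^sup>2)
      \<le> (qform (Q j) x + 1) / 2" for x
    using soc_q psd J_sub by blast
  have feq: "cr_feasible m p a Q b c u x (\<lambda>j. qform (Q j) x) \<longleftrightarrow> qcqp_feasible m p a Q b c u x" for x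
    using socq[of x] unfolding cr_feasible_def qcqp_feasible_def crfun_q by simp
  show ?thesis
  proof
    assume h: "qcqp_solves m p a Q b c u xs"
    show "cr_solves m p a Q b c u xs (\<lambda>j. qform (Q j) xs)"
      unfolding cr_solves_def
    proof (intro conjI allI impI)
      show "cr_feasible m p a Q b c u xs (\<lambda>j. qform (Q j) xs)"
        using h feq unfolding qcqp_solves_def by blast
      fix x t assume "cr_feasible m p a Q b c u x t"
      then obtain x' where x': "qcqp_feasible m p a Q b c u x'" "gfun m a Q b c 0 x' \<le> crfun m p a Q b c 0 x t"
        using construct[OF psd dim_cond] by blast
      have "gfun m a Q b c 0 xs \<le> gfun m a Q b c 0 x'" using h x'(1) unfolding qcqp_solves_def by blast
      thus "crfun m p a Q b c 0 xs (\<lambda>j. qform (Q j) xs) \<le> crfun m p a Q b c 0 x t"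
        using x'(2) by (simp add: crfun_q)
    qed
  next
    assume h: "cr_solves m p a Q b c u xs (\<lambda>j. qform (Q j) xs)"
    show "qcqp_solves m p a Q b c u xs"
      unfolding qcqp_solves_def
    proof (intro conjI allI impI)
      show "qcqp_feasible m p a Q b c u xs" using h feq unfolding cr_solves_def by blast
      fix x assume "qcqp_feasible m p a Q b c u x"
      hence "cr_feasible m p a Q b c u x (\<lambda>j. qform (Q j) x)" using feq by blast
      hence "crfun m p a Q b c 0 xs (\<lambda>j. qform (Q j) xs) \<le> crfun m p a Q b c 0 x (\<lambda>j. qform (Q j) x)"
        using h unfolding cr_solves_def by blast
      thus "gfun m a Q b c 0 xs \<le> gfun m a Q b c 0 x" by (simp add: crfun_q)
    qed
  qed
qed

end
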